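(* Let $\alpha$ be an expanding algebraic number with primitive minimal polynomial $A(X)=a_nX^n+\dots+a_1X+a_0\in\mathbb{Z}[X]$. The $\mathbb{Z}$-module $\Lambda_{\alpha,0}=\mathbb{Z}[\alpha]\cap\alpha^{-1}\mathbb{Z}[\alpha^{-1}]$ is generated by $w_0=a_n$ and $w_i=\alpha w_{i-1}+a_{n-i}$ for $1\le i<n$.
   Context: Expanding: all roots of $A$ have modulus $>1$; primitive: the coefficients of $A$ have gcd 1. *)

theory Defs
  imports "HOL-Computational_Algebra.Computational_Algebra"
begin

definition int_poly_ring :: "complex \<Rightarrow> complex set" where
  "int_poly_ring \<alpha> = {poly (map_poly of_int p) \<alpha> | p :: int poly. True}"

definition Lambda0 :: "complex \<Rightarrow> complex set" where
  "Lambda0 \<alpha> = int_poly_ring \<alpha> \<inter> ((\<lambda>z. inverse \<alpha> * z) ` int_poly_ring (inverse \<alpha>))"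

fun wgen :: "int poly \<Rightarrow> complex \<Rightarrow> nat \<Rightarrow> complex" where
  "wgen A \<alpha> 0 = of_int (coeff A (degree A))"
| "wgen A \<alpha> (Suc i) = \<alpha> * wgen A \<alpha> i + of_int (coeff A (degree A - Suc i))"

definition int_span_w :: "int poly \<Rightarrow> complex \<Rightarrow> complex set" where
  "int_span_w A \<alpha> = {(\<Sum>i<degree A. of_int (c i) * wgen A \<alpha> i) | c :: nat \<Rightarrow> int. True}"

end

theory Submission
  imports Defs
begin

abbreviation ip :: "int poly \<Rightarrow> complex poly" where "ip \<equiv> map_poly of_int"

lemma ip_add: "ip (p + q) = ip p + ip q"
  by (rule poly_eqI) (simp add: coeff_map_poly)
lemma ip_diff: "ip (p - q) = ip p - ip q"
  by (rule poly_eqI) (simp add: coeff_map_poly)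
lemma ip_uminus: "ip (- p) = - ip p"
  by (rule poly_eqI) (simp add: coeff_map_poly)
lemma ip_mult: "ip (p * q) = ip p * ip q"
  by (rule poly_eqI) (simp add: coeff_map_poly coeff_mult)
lemma ip_smult: "ip (smult c p) = smult (of_int c) (ip p)"
  by (rule poly_eqI) (simp add: coeff_map_poly)
lemma ip_pCons: "ip (pCons a p) = pCons (of_int a) (ip p)"
  by (rule map_poly_pCons) simp
lemma ip_monom: "ip (monom c n) = monom (of_int c) n"
  by (rule map_poly_monom) simp
lemma ip_degree: "degree (ip p) = degree p"
  by (rule degree_map_poly) simp
lemma ip_reflect: "ip (reflect_poly p) = reflect_poly (ip p)"
  by (rule poly_eqI) (simp add: coeff_map_poly coeff_reflect_poly ip_degree)

lemma shift_add: "poly_shift m (p + q) = poly_shift m p + poly_shift m q"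
  by (rule poly_eqI) (simp add: coeff_poly_shift)
lemma shift_diff: "poly_shift m (p - q) = poly_shift m p - poly_shift m (q::'a::comm_ring poly)"
  by (rule poly_eqI) (simp add: coeff_poly_shift)
lemma shift_smult: "poly_shift m (smult c p) = smult c (poly_shift m p)"
  by (rule poly_eqI) (simp add: coeff_poly_shift)
lemma shift_pCons0: "poly_shift (Suc m) (pCons 0 p) = poly_shift m p"
  by (rule poly_eqI) (simp add: coeff_poly_shift)
lemma shift_rec: "poly_shift m p = pCons (coeff p m) (poly_shift (Suc m) p)"
  by (rule poly_eqI) (simp add: coeff_poly_shift coeff_pCons split: nat.splits)
lemma shift_monom_mult: "poly_shift m (monom 1 m * p) = (p :: 'a::comm_ring_1 poly)"
  by (rule poly_eqI) (simp add: coeff_poly_shift coeff_monom_mult)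
lemma shift_small: "degree p < m \<Longrightarrow> poly_shift m p = 0"
  by (rule poly_eqI) (simp add: coeff_poly_shift coeff_eq_0)
lemma shift_cutoff: "p = monom 1 k * poly_shift k p + poly_cutoff k (p :: 'a::comm_ring_1 poly)"
  by (rule poly_eqI) (simp add: coeff_poly_shift coeff_monom_mult coeff_poly_cutoff)
lemma degree_cutoff: "k \<ge> 1 \<Longrightarrow> degree (poly_cutoff k p) \<le> k - 1"
  by (rule degree_le) (auto simp add: coeff_poly_cutoff)

lemma span_add: "x \<in> int_span_w A a \<Longrightarrow> y \<in> int_span_w A a \<Longrightarrow> x + y \<in> int_span_w A a"
proof -
  assume "x \<in> int_span_w A a" "y \<in> int_span_w A a"
  then obtain c d where "x = (\<Sum>i<degree A. of_int (c i) * wgen A a i)"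
     "y = (\<Sum>i<degree A. of_int (d i) * wgen A a i)" unfolding int_span_w_def by blast
  define e where "e = (\<lambda>i. c i + d i)"
  have "x + y = (\<Sum>i<degree A. of_int (e i) * wgen A a i)"
    using \<open>x = _\<close> \<open>y = _\<close> by (simp add: e_def sum.distrib distrib_right)
  then show ?thesis unfolding int_span_w_def by blast
qed

lemma span_smult: "x \<in> int_span_w A a \<Longrightarrow> of_int k * x \<in> int_span_w A a"
proof -
  assume "x \<in> int_span_w A a"
  then obtain c where "x = (\<Sum>i<degree A. of_int (c i) * wgen A a i)"
    unfolding int_span_w_def by blast
  define e where "e = (\<lambda>i. k * c i)"
  have "of_int k * x = (\<Sum>i<degree A. of_int (e i) * wgen A a i)"
    using \<open>x = _\<close> by (simp add: e_def sum_distrib_left mult.assoc)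
  then show ?thesis unfolding int_span_w_def by blast
qed

lemma span_zero: "0 \<in> int_span_w A a"
proof -
  define e where "e = (\<lambda>_::nat. 0::int)"
  have "0 = (\<Sum>i<degree A. of_int (e i) * wgen A a i)" by (simp add: e_def)
  then show ?thesis unfolding int_span_w_def by blast
qed

lemma span_gen: "i < degree A \<Longrightarrow> wgen A a i \<in> int_span_w A a"
proof -
  assume i: "i < degree A"
  define e where "e = (\<lambda>j. if j = i then 1 else 0::int)"
  have "wgen A a i = (\<Sum>j<degree A. of_int (e j) * wgen A a j)"
  proof -
    have "(\<Sum>j<degree A. of_int (e j) * wgen A a j) = (\<Sum>j<degree A. if j = i then wgen A a j else 0)"
      by (rule sum.cong) (auto simp: e_def)
    then show ?thesis using i by simp
  qed
  then show ?thesis unfolding int_span_w_def by blast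
qed

lemma shift_wgen:
  fixes A :: "int poly" and a :: complex
  shows "i < degree A \<Longrightarrow> poly (ip (poly_shift (degree A - i) A)) a = wgen A a i"
proof (induction i)
  case 0
  have "poly_shift (degree A) A = [:coeff A (degree A):]"
    by (rule poly_eqI) (auto simp: coeff_poly_shift coeff_pCons coeff_eq_0 split: nat.splits)
  then show ?case by (simp add: ip_pCons)
next
  case (Suc i)
  have e: "degree A - i = Suc (degree A - Suc i)" using Suc.prems by simp
  have "poly_shift (degree A - Suc i) A = pCons (coeff A (degree A - Suc i)) (poly_shift (degree A - i) A)"
    by (subst shift_rec) (simp add: e)
  then show ?case using Suc by (simp add: ip_pCons)
qed

lemma shift_A_span:
  fixes A :: "int poly" and a :: complex
  assumes root: "poly (ip A) a = 0"
  shows "poly (ip (poly_shift m A)) a \<in> int_span_w A a"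
proof (cases "m = 0")
  case True then show ?thesis using root span_zero by simp
next
  case False
  show ?thesis
  proof (cases "m \<le> degree A")
    case True
    then have "poly (ip (poly_shift (degree A - (degree A - m)) A)) a = wgen A a (degree A - m)"
      using False by (intro shift_wgen) simp
    then show ?thesis using True False span_gen[of "degree A - m" A a] by simp
  next
    case False
    then show ?thesis using shift_small[of A m] span_zero by simp
  qed
qed

lemma shift_AS_span:
  fixes A :: "int poly" and a :: complex
  assumes root: "poly (ip A) a = 0"
  shows "\<forall>m. poly (ip (poly_shift m (A * S))) a \<in> int_span_w A a"
proof (induction S)
  case 0
  then show ?case using span_zero by simp
next
  case (pCons c S)
  show ?case
  proof
    fix m
    show "poly (ip (poly_shift m (A * pCons c S))) a \<in> int_span_w A a"
    proof (cases m)
      case 0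
      then show ?thesis using root span_zero by (simp del: mult_pCons_right add: ip_mult)
    next
      case (Suc k)
      have "poly (ip (poly_shift m (A * pCons c S))) a =
            of_int c * poly (ip (poly_shift m A)) a + poly (ip (poly_shift k (A * S))) a"
        by (simp add: Suc shift_add shift_smult shift_pCons0 ip_add ip_smult)
      then show ?thesis using pCons.IH shift_A_span[OF root, of m] span_add span_smult by metis
    qed
  qed
qed

lemma const_root_zero:
  fixes C :: "int poly" and a :: complex
  assumes "degree C = 0" "poly (ip C) a = 0"
  shows "C = 0"
proof -
  from assms(1) obtain k where "C = [:k:]" by (metis degree_eq_zeroE)
  with assms(2) show ?thesis by (simp add: ip_pCons)
qed

lemma root_dvd:
  fixes A B :: "int poly" and a :: complex
  assumes irred: "irreducible A" and root: "poly (ip A) a = 0" and rootB: "poly (ip B) a = 0"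
  shows "A dvd B"
proof -
  have A0: "A \<noteq> 0" using irred by auto
  have dA: "degree A \<noteq> 0" using const_root_zero[OF _ root] A0 by blast
  have "\<exists>C. (C \<noteq> 0 \<and> poly (ip C) a = 0) \<and> (\<forall>D. (D \<noteq> 0 \<and> poly (ip D) a = 0) \<longrightarrow> degree C \<le> degree D)"
    using ex_has_least_nat[of "\<lambda>C. C \<noteq> 0 \<and> poly (ip C) a = 0" A degree] A0 root by blast
  then obtain C where C0: "C \<noteq> 0" and Croot: "poly (ip C) a = 0"
    and Cmin: "\<And>D. D \<noteq> 0 \<Longrightarrow> poly (ip D) a = 0 \<Longrightarrow> degree C \<le> degree D" by blast
  have pd: "\<exists>c q. c \<noteq> 0 \<and> smult c E = C * q" if "poly (ip E) a = 0" for E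
  proof -
    obtain q r where qr: "pseudo_divmod E C = (q, r)" by (cases "pseudo_divmod E C")
    define c where "c = coeff C (degree C) ^ (Suc (degree E) - degree C)"
    have eq: "smult c E = C * q + r" and rr: "r = 0 \<or> degree r < degree C"
      using pseudo_divmod[OF C0 qr] by (auto simp: c_def)
    have c0: "c \<noteq> 0" using C0 by (simp add: c_def)
    have "ip r = smult (of_int c) (ip E) - ip C * ip q"
      using arg_cong[OF eq, of ip] by (simp add: ip_smult ip_add ip_mult)
    then have "poly (ip r) a = 0" using that Croot by simp
    then have "r = 0" using rr Cmin[of r] by fastforce
    then show ?thesis using eq c0 by auto
  qed
  obtain c1 q1 where c1: "c1 \<noteq> 0" and e1: "smult c1 A = C * q1" using pd[OF root] by blast
  obtain c2 q2 where c2: "c2 \<noteq> 0" and e2: "smult c2 B = C * q2" using pd[OF rootB] by blast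
  have pr: "prime_elem A" using irred by (rule irreducible_imp_prime_poly)
  have "A dvd C * q1" unfolding e1[symmetric] by (rule dvdI[of _ _ "[:c1:]"]) simp
  then have "A dvd C \<or> A dvd q1" using pr prime_elem_dvd_mult_iff by blast
  then show ?thesis
  proof
    assume "A dvd C"
    then have "A dvd smult c2 B" unfolding e2 by simp
    then have "A dvd [:c2:] * B" by simp
    then have "A dvd [:c2:] \<or> A dvd B" using pr prime_elem_dvd_mult_iff by blast
    moreover have "\<not> A dvd [:c2:]"
    proof
      assume "A dvd [:c2:]"
      then have "degree A \<le> degree [:c2:]" using c2 by (intro dvd_imp_degree_le) auto
      then show False using dA by simp
    qed
    ultimately show ?thesis by blast
  next
    assume d: "A dvd q1"
    have q10: "q1 \<noteq> 0" using e1 c1 A0 by auto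
    have "degree A = degree C + degree q1"
      using arg_cong[OF e1, of degree] c1 C0 q10 by (simp add: degree_mult_eq)
    moreover have "degree A \<le> degree q1" using d q10 by (rule dvd_imp_degree_le)
    ultimately have "degree C = 0" by simp
    then show ?thesis using const_root_zero[OF _ Croot] C0 by blast
  qed
qed

lemma Lambda0_iff:
  "x \<in> Lambda0 a \<longleftrightarrow> (\<exists>P. x = poly (ip P) a) \<and> (\<exists>Q. x = inverse a * poly (ip Q) (inverse a))"
  by (auto simp: Lambda0_def int_poly_ring_def)

lemma Lambda0_add: "x \<in> Lambda0 a \<Longrightarrow> y \<in> Lambda0 a \<Longrightarrow> x + y \<in> Lambda0 a"
  unfolding Lambda0_iff
proof (elim conjE exE)
  fix P1 P2 Q1 Q2
  assume "x = poly (ip P1) a" "x = inverse a * poly (ip Q1) (inverse a)"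
     "y = poly (ip P2) a" "y = inverse a * poly (ip Q2) (inverse a)"
  then show "(\<exists>P. x + y = poly (ip P) a) \<and> (\<exists>Q. x + y = inverse a * poly (ip Q) (inverse a))"
    by (intro conjI exI[of _ "P1 + P2"] exI[of _ "Q1 + Q2"]) (simp_all add: ip_add distrib_left)
qed

lemma Lambda0_smult: "x \<in> Lambda0 a \<Longrightarrow> of_int k * x \<in> Lambda0 a"
  unfolding Lambda0_iff
proof (elim conjE exE)
  fix P1 Q1
  assume "x = poly (ip P1) a" "x = inverse a * poly (ip Q1) (inverse a)"
  then show "(\<exists>P. of_int k * x = poly (ip P) a) \<and> (\<exists>Q. of_int k * x = inverse a * poly (ip Q) (inverse a))"
    by (intro conjI exI[of _ "smult k P1"] exI[of _ "smult k Q1"]) (simp_all add: ip_smult)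
qed

lemma Lambda0_zero: "0 \<in> Lambda0 a"
  unfolding Lambda0_iff by (intro conjI exI[of _ 0]) simp_all

lemma Lambda0_sum: "(\<And>i. i < n \<Longrightarrow> f i \<in> Lambda0 a) \<Longrightarrow> (\<Sum>i<(n::nat). f i) \<in> Lambda0 a"
  by (induction n) (auto intro: Lambda0_add Lambda0_zero)

lemma wgen_Lambda0:
  fixes A :: "int poly" and a :: complex
  assumes root: "poly (ip A) a = 0" and a0: "a \<noteq> 0" and i: "i < degree A"
  shows "wgen A a i \<in> Lambda0 a"
proof -
  define k where "k = degree A - i"
  have k1: "k \<ge> 1" using i by (simp add: k_def)
  have w: "wgen A a i = poly (ip (poly_shift k A)) a"
    using shift_wgen[OF i, of a] by (simp add: k_def)
  define Cc where "Cc = poly_cutoff k A"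
  define d where "d = degree Cc"
  have dk: "d \<le> k - 1" using degree_cutoff[OF k1, of A] by (simp add: d_def Cc_def)
  have "ip A = monom 1 k * ip (poly_shift k A) + ip Cc"
    using arg_cong[OF shift_cutoff[of A k], of ip] by (simp add: Cc_def ip_add ip_mult ip_monom)
  then have e0: "0 = a ^ k * wgen A a i + poly (ip Cc) a"
    using root w by (simp add: poly_monom)
  define Q where "Q = - (monom 1 (k - 1 - d) * reflect_poly Cc)"
  have "poly (ip Q) (inverse a) = - (inverse a ^ (k - 1 - d) * (inverse a ^ d * poly (ip Cc) a))"
    using poly_reflect_poly_nz[of "inverse a" "ip Cc"] a0
    by (simp add: Q_def ip_uminus ip_mult ip_monom ip_reflect poly_monom ip_degree d_def)
  also have "\<dots> = - (inverse a ^ (k - 1) * poly (ip Cc) a)"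
  proof -
    have "k - Suc d + d = k - 1" using dk by simp
    then show ?thesis by (simp add: power_add[symmetric] mult.assoc[symmetric])
  qed
  finally have "inverse a * poly (ip Q) (inverse a) = - (inverse a ^ k * poly (ip Cc) a)"
    using k1 by (simp add: mult.assoc[symmetric] power_Suc[symmetric])
  also have "\<dots> = wgen A a i"
  proof -
    have "poly (ip Cc) a = - (a ^ k * wgen A a i)" using e0 by (simp add: eq_neg_iff_add_eq_0 add.commute)
    then show ?thesis using a0 by (simp add: mult.assoc[symmetric] power_mult_distrib[symmetric])
  qed
  finally show ?thesis unfolding Lambda0_iff using w by metis
qed

theorem lemma6p14:
  fixes \<alpha> :: complex and A :: "int poly"
  assumes irred: "irreducible A"
    and prim: "content A = 1"
    and root: "poly (map_poly of_int A) \<alpha> = 0"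
    and expanding: "\<And>z::complex. poly (map_poly of_int A) z = 0 \<Longrightarrow> norm z > 1"
  shows "Lambda0 \<alpha> = int_span_w A \<alpha>"
proof
  have a0: "\<alpha> \<noteq> 0" using expanding[OF root] by auto
  show "Lambda0 \<alpha> \<subseteq> int_span_w A \<alpha>"
  proof
    fix x assume "x \<in> Lambda0 \<alpha>"
    then obtain P Q where xP: "x = poly (ip P) \<alpha>" and xQ: "x = inverse \<alpha> * poly (ip Q) (inverse \<alpha>)"
      unfolding Lambda0_iff by blast
    define d where "d = degree Q"
    define R where "R = reflect_poly Q"
    define m where "m = Suc d"
    have R: "poly (ip R) \<alpha> = \<alpha> ^ d * poly (ip Q) (inverse \<alpha>)"
      using poly_reflect_poly_nz[OF a0, of "ip Q"] by (simp add: R_def ip_reflect ip_degree d_def)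
    have dR: "degree R < m" using degree_reflect_poly_le[of Q] by (simp add: R_def m_def d_def)
    define B where "B = monom 1 m * P - R"
    have "poly (ip B) \<alpha> = \<alpha> ^ m * x - \<alpha> ^ d * poly (ip Q) (inverse \<alpha>)"
      using R xP by (simp add: B_def ip_diff ip_mult ip_monom poly_monom)
    also have "\<dots> = 0" using xQ a0 by (simp add: m_def)
    finally have "A dvd B" using root_dvd[OF irred root] by blast
    then obtain S where S: "B = A * S" by blast
    have "poly_shift m (A * S) = P"
      using S[symmetric] shift_small[OF dR] by (simp add: B_def shift_diff shift_monom_mult)
    then show "x \<in> int_span_w A \<alpha>" using shift_AS_span[OF root, of S] xP by metis
  qed
next
  have a0: "\<alpha> \<noteq> 0" using expanding[OF root] by auto
  show "int_span_w A \<alpha> \<subseteq> Lambda0 \<alpha>"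
  proof
    fix x assume "x \<in> int_span_w A \<alpha>"
    then obtain c where x: "x = (\<Sum>i<degree A. of_int (c i) * wgen A \<alpha> i)"
      unfolding int_span_w_def by blast
    show "x \<in> Lambda0 \<alpha>" unfolding x
      by (rule Lambda0_sum) (intro Lambda0_smult wgen_Lambda0[OF root a0])
  qed
qed

end
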